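(* Let $n\ge2$, $\rho\ge0$, and let $\lambda$ be an eigenvalue of $K_n(\rho)=\left[\rho^{|j-k|}\right]_{j,k=1}^n$. Then $\lambda$ is extraordinary iff $|\lambda|>n$.
   Context: Convention $\rho^0=1$. Let $\sigma(\rho,\theta)=\frac{1-\rho^2}{1-2\rho\cos\theta+\rho^2}$ and $\mathrm{range}\{\sigma(\rho,\theta)\}=\{\sigma(\rho,\theta):\theta\in(-\pi,\pi]\}$. For real $\rho\notin\{-1,1\}$, an eigenvalue of $K_n(\rho)$ is called ordinary if it lies in $\mathrm{range}\{\sigma(\rho,\theta)\}$; for $\rho\in\{0,\pm1\}$ all eigenvalues are called ordinary. An eigenvalue is extraordinary if it is not ordinary. *)

theory Defs
  imports Complex_Main "Jordan_Normal_Form.Char_Poly"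
begin

text \<open>Kac--Murdock--Szego matrix K_n(rho) = [rho^|j-k|], indices 0..n-1 (same differences as 1..n).
  Note 0 ^ 0 = 1 in Isabelle, matching the convention rho^0 = 1.\<close>
definition KMS :: "nat \<Rightarrow> real \<Rightarrow> real mat" where
  "KMS n \<rho> = mat n n (\<lambda>(j, k). \<rho> ^ nat \<bar>int j - int k\<bar>)"

definition sigma :: "real \<Rightarrow> real \<Rightarrow> real" where
  "sigma \<rho> \<theta> = (1 - \<rho>\<^sup>2) / (1 - 2 * \<rho> * cos \<theta> + \<rho>\<^sup>2)"

definition sigma_range :: "real \<Rightarrow> real set" where
  "sigma_range \<rho> = {sigma \<rho> \<theta> | \<theta>. \<theta> \<in> {-pi<..pi}}"

definition ordinary :: "real \<Rightarrow> real \<Rightarrow> bool" where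
  "ordinary \<rho> lam = (\<rho> \<in> {0, 1, -1} \<or> lam \<in> sigma_range \<rho>)"

definition extraordinary :: "real \<Rightarrow> real \<Rightarrow> bool" where
  "extraordinary \<rho> lam = (\<not> ordinary \<rho> lam)"

end

theory Submission
  imports Defs
begin


lemma dist_nat: "nat \<bar>int a - int b\<bar> = (if a \<le> b then b - a else a - b)"
  by auto

lemma eig_comp:
  assumes "v \<in> carrier_vec n" "KMS n r *\<^sub>v v = lam \<cdot>\<^sub>v v" "i < n"
  shows "(\<Sum>j<n. r ^ nat \<bar>int i - int j\<bar> * v $ j) = lam * v $ i"
proof -
  have "(KMS n r *\<^sub>v v) $ i = lam * v $ i" using assms by simp
  moreover have "(KMS n r *\<^sub>v v) $ i = (\<Sum>j<n. r ^ nat \<bar>int i - int j\<bar> * v $ j)"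
    using assms(1,3) unfolding KMS_def by (simp add: scalar_prod_def lessThan_atLeast0)
  ultimately show ?thesis by simp
qed

lemma I1:
  fixes u :: "nat \<Rightarrow> real"
  assumes "n \<ge> 1"
  shows "(\<Sum>j<n. r ^ nat \<bar>int 0 - int j\<bar> * u j) - r * (\<Sum>j<n. r ^ nat \<bar>int 1 - int j\<bar> * u j) = (1 - r\<^sup>2) * u 0"
proof -
  have "(\<Sum>j<n. r ^ nat \<bar>int 0 - int j\<bar> * u j) - r * (\<Sum>j<n. r ^ nat \<bar>int 1 - int j\<bar> * u j)
      = (\<Sum>j<n. (r ^ nat \<bar>int 0 - int j\<bar> - r * r ^ nat \<bar>int 1 - int j\<bar>) * u j)"
    by (simp add: sum_distrib_left sum_subtractf sum.distrib algebra_simps)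
  also have "\<dots> = (\<Sum>j<n. (if j = 0 then (1 - r\<^sup>2) * u j else 0))"
  proof (rule sum.cong[OF refl])
    fix j assume "j \<in> {..<n}"
    show "(r ^ nat \<bar>int 0 - int j\<bar> - r * r ^ nat \<bar>int 1 - int j\<bar>) * u j = (if j = 0 then (1 - r\<^sup>2) * u j else 0)"
    proof (cases j)
      case 0 then show ?thesis by (simp add: power2_eq_square)
    next
      case (Suc m)
      hence e: "nat \<bar>int 0 - int j\<bar> = Suc m" "nat \<bar>int 1 - int j\<bar> = m" by auto
      show ?thesis unfolding e using Suc by simp
    qed
  qed
  also have "\<dots> = (1 - r\<^sup>2) * u 0" using assms by (simp add: sum.delta)
  finally show ?thesis .
qed

lemma I2:
  fixes u :: "nat \<Rightarrow> real"
  assumes "n \<ge> 2"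
  shows "(\<Sum>j<n. r ^ nat \<bar>int (n - 1) - int j\<bar> * u j) - r * (\<Sum>j<n. r ^ nat \<bar>int (n - 2) - int j\<bar> * u j) = (1 - r\<^sup>2) * u (n - 1)"
proof -
  have "(\<Sum>j<n. r ^ nat \<bar>int (n - 1) - int j\<bar> * u j) - r * (\<Sum>j<n. r ^ nat \<bar>int (n - 2) - int j\<bar> * u j)
      = (\<Sum>j<n. (r ^ nat \<bar>int (n - 1) - int j\<bar> - r * r ^ nat \<bar>int (n - 2) - int j\<bar>) * u j)"
    by (simp add: sum_distrib_left sum_subtractf sum.distrib algebra_simps)
  also have "\<dots> = (\<Sum>j<n. (if j = n - 1 then (1 - r\<^sup>2) * u j else 0))"
  proof (rule sum.cong[OF refl])
    fix j assume j: "j \<in> {..<n}"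
    show "(r ^ nat \<bar>int (n - 1) - int j\<bar> - r * r ^ nat \<bar>int (n - 2) - int j\<bar>) * u j = (if j = n - 1 then (1 - r\<^sup>2) * u j else 0)"
    proof (cases "j = n - 1")
      case True
      hence e: "nat \<bar>int (n - 1) - int j\<bar> = 0" "nat \<bar>int (n - 2) - int j\<bar> = 1" using assms by auto
      show ?thesis unfolding e using True by (simp add: power2_eq_square)
    next
      case False
      then obtain m where m: "n - 1 = j + Suc m" using j by (metis add_Suc_right less_imp_Suc_add lessThan_iff less_Suc_eq_le le_neq_implies_less diff_Suc_1 Suc_pred' le_eq_less_or_eq)
      hence e: "nat \<bar>int (n - 1) - int j\<bar> = Suc m" "nat \<bar>int (n - 2) - int j\<bar> = m" using assms by auto
      show ?thesis unfolding e using False by simp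
    qed
  qed
  also have "\<dots> = (1 - r\<^sup>2) * u (n - 1)" using assms by (simp add: sum.delta)
  finally show ?thesis .
qed

lemma coefI3:
  fixes r :: real
  assumes "1 \<le> i"
  shows "(1 + r\<^sup>2) * r ^ nat \<bar>int i - int j\<bar> - r * r ^ nat \<bar>int (i - 1) - int j\<bar>
          - r * r ^ nat \<bar>int (i + 1) - int j\<bar> = (if j = i then 1 - r\<^sup>2 else 0)"
proof -
  consider (eq) "j = i" | (lt) "j < i" | (gt) "i < j" by linarith
  then show ?thesis
  proof cases
    case eq
    have e: "nat \<bar>int i - int j\<bar> = 0" "nat \<bar>int (i - 1) - int j\<bar> = 1" "nat \<bar>int (i + 1) - int j\<bar> = 1"
      using assms eq by simp_all
    have "(1 + r\<^sup>2) * r ^ 0 - r * r ^ 1 - r * r ^ 1 = (1 - r\<^sup>2::real)"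
      by (simp add: power2_eq_square algebra_simps)
    moreover have "(if j = i then 1 - r\<^sup>2 else (0::real)) = 1 - r\<^sup>2" using eq by (simp only: if_True simp_thms)
    ultimately show ?thesis unfolding e by (simp only:)
  next
    case lt
    obtain m where m: "i = j + Suc m" using less_imp_Suc_add[OF lt] add_Suc_right by metis
    have e: "nat \<bar>int i - int j\<bar> = Suc m" "nat \<bar>int (i - 1) - int j\<bar> = m" "nat \<bar>int (i + 1) - int j\<bar> = Suc (Suc m)"
      using m by simp_all
    have "(1 + r\<^sup>2) * r ^ Suc m - r * r ^ m - r * r ^ Suc (Suc m) = 0"
      by (simp add: power2_eq_square algebra_simps)
    moreover have "(if j = i then 1 - r\<^sup>2 else (0::real)) = 0" using lt by auto
    ultimately show ?thesis unfolding e by (simp only:)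
  next
    case gt
    obtain m where m: "j = i + Suc m" using less_imp_Suc_add[OF gt] add_Suc_right by metis
    have e: "nat \<bar>int i - int j\<bar> = Suc m" "nat \<bar>int (i - 1) - int j\<bar> = Suc (Suc m)" "nat \<bar>int (i + 1) - int j\<bar> = m"
      using m assms by simp_all
    have "(1 + r\<^sup>2) * r ^ Suc m - r * r ^ Suc (Suc m) - r * r ^ m = 0"
      by (simp add: power2_eq_square algebra_simps)
    moreover have "(if j = i then 1 - r\<^sup>2 else (0::real)) = 0" using gt by auto
    ultimately show ?thesis unfolding e by (simp only:)
  qed
qed

lemma I3:
  fixes u :: "nat \<Rightarrow> real"
  assumes "1 \<le> i" "i + 1 < n"
  shows "(1 + r\<^sup>2) * (\<Sum>j<n. r ^ nat \<bar>int i - int j\<bar> * u j) - r * (\<Sum>j<n. r ^ nat \<bar>int (i - 1) - int j\<bar> * u j)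
     - r * (\<Sum>j<n. r ^ nat \<bar>int (i + 1) - int j\<bar> * u j) = (1 - r\<^sup>2) * u i"
proof -
  have a: "c * (\<Sum>j<n. f j * u j) = (\<Sum>j<n. c * f j * u j)" for c f
    by (simp add: sum_distrib_left mult.assoc)
  have "(1 + r\<^sup>2) * (\<Sum>j<n. r ^ nat \<bar>int i - int j\<bar> * u j) - r * (\<Sum>j<n. r ^ nat \<bar>int (i - 1) - int j\<bar> * u j)
     - r * (\<Sum>j<n. r ^ nat \<bar>int (i + 1) - int j\<bar> * u j)
      = (\<Sum>j<n. ((1 + r\<^sup>2) * r ^ nat \<bar>int i - int j\<bar> - r * r ^ nat \<bar>int (i - 1) - int j\<bar>
          - r * r ^ nat \<bar>int (i + 1) - int j\<bar>) * u j)"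
    unfolding a sum_subtractf[symmetric] by (rule sum.cong[OF refl]) (simp add: algebra_simps)
  also have "\<dots> = (\<Sum>j<n. (if j = i then (1 - r\<^sup>2) * u j else 0))"
    unfolding coefI3[OF assms(1)] by (rule sum.cong[OF refl]) simp
  also have "\<dots> = (1 - r\<^sup>2) * u i" using assms by (simp add: sum.delta)
  finally show ?thesis .
qed




fun pp :: "real \<Rightarrow> real \<Rightarrow> nat \<Rightarrow> real" where
  "pp c r 0 = r"
| "pp c r (Suc 0) = 1"
| "pp c r (Suc (Suc k)) = 2 * c * pp c r (Suc k) - pp c r k"

lemma pp_gen:
  assumes "f 0 = r" "f 1 = 1" "\<And>k. f (Suc (Suc k)) = 2 * c * f (Suc k) - f k"
  shows "pp c r k = f k"
proof (induction k rule: less_induct)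
  case (less k)
  show ?case
  proof (cases k)
    case 0 then show ?thesis using assms by simp
  next
    case (Suc m)
    show ?thesis
    proof (cases m)
      case 0 then show ?thesis using assms Suc by simp
    next
      case (Suc j)
      then show ?thesis using less \<open>k = Suc m\<close> assms(3)[of j] by simp
    qed
  qed
qed

lemma lin_aux: "(x * (2*c*a1 - a0) + y * (2*c*b1 - b0)) / (D::real) = 2*c*((x*a1 + y*b1)/D) - (x*a0+y*b0)/D"
  by (cases "D = 0") (simp_all add: field_simps)

lemma pp_z:
  assumes z: "z \<noteq> 0" "z\<^sup>2 \<noteq> 1" and c: "2 * c = z + 1 / z"
  shows "pp c r k = ((z - r) * z ^ k + (r * z - 1) * z * (1 / z) ^ k) / (z\<^sup>2 - 1)"
proof (rule pp_gen)
  have d: "z\<^sup>2 - 1 \<noteq> 0" using z by simp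
  show "((z - r) * z ^ 0 + (r * z - 1) * z * (1 / z) ^ 0) / (z\<^sup>2 - 1) = r"
    using d by (simp add: field_simps power2_eq_square)
  show "((z - r) * z ^ 1 + (r * z - 1) * z * (1 / z) ^ 1) / (z\<^sup>2 - 1) = 1"
    using d z by (simp add: field_simps power2_eq_square)
  fix k
  have cz: "2 * c * z = z * z + 1" using c z by (simp add: field_simps)
  have cz': "2 * c * (1/z) = (1/z) * (1/z) + 1" using c z by (simp add: field_simps)
  have e1: "z ^ Suc (Suc k) = 2 * c * z ^ Suc k - z ^ k"
  proof -
    have "2 * c * z ^ Suc k = z ^ k * (2 * c * z)" by (simp add: algebra_simps)
    also have "\<dots> = z ^ Suc (Suc k) + z ^ k" unfolding cz by (simp add: algebra_simps)
    finally show ?thesis by simp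
  qed
  have e2: "(1/z) ^ Suc (Suc k) = 2 * c * (1/z) ^ Suc k - (1/z) ^ k"
  proof -
    have "2 * c * (1/z) ^ Suc k = (1/z) ^ k * (2 * c * (1/z))" by (simp only: power_Suc algebra_simps)
    also have "\<dots> = (1/z) ^ Suc (Suc k) + (1/z) ^ k" unfolding cz' by (simp only: power_Suc algebra_simps)
    finally show ?thesis by simp
  qed
  show "((z - r) * z ^ Suc (Suc k) + (r * z - 1) * z * (1 / z) ^ Suc (Suc k)) / (z\<^sup>2 - 1) =
    2 * c * (((z - r) * z ^ Suc k + (r * z - 1) * z * (1 / z) ^ Suc k) / (z\<^sup>2 - 1)) -
    ((z - r) * z ^ k + (r * z - 1) * z * (1 / z) ^ k) / (z\<^sup>2 - 1)"
    unfolding e1 e2 by (rule lin_aux)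
qed

lemma pp_z_cond:
  assumes z: "z \<noteq> 0" "z\<^sup>2 \<noteq> 1" and c: "2 * c = z + 1 / z"
    and h: "pp c r (Suc n) = r * pp c r n"
  shows "z ^ (2 * n) * (z - r)\<^sup>2 = (r * z - 1)\<^sup>2"
proof -
  have d: "z\<^sup>2 - 1 \<noteq> 0" using z by simp
  define a where "a = z ^ n"
  define b where "b = (1/z) ^ n"
  have ab: "a * b = 1" unfolding a_def b_def using z by (simp add: power_mult_distrib[symmetric])
  have p1: "pp c r (Suc n) = ((z - r) * z * a + (r * z - 1) * b) / (z\<^sup>2 - 1)"
    unfolding pp_z[OF z c] a_def b_def using z by (simp add: power_Suc)
  have p2: "pp c r n = ((z - r) * a + (r * z - 1) * z * b) / (z\<^sup>2 - 1)"
    unfolding pp_z[OF z c] a_def b_def by simp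
  have "(z - r) * z * a + (r * z - 1) * b = r * ((z - r) * a + (r * z - 1) * z * b)"
    using h unfolding p1 p2 using d by (simp add: field_simps)
  hence "(z - r)\<^sup>2 * a = (r * z - 1)\<^sup>2 * b" by (simp add: algebra_simps power2_eq_square)
  hence "(z - r)\<^sup>2 * (a * a) = (r * z - 1)\<^sup>2 * (a * b)" by (simp add: algebra_simps)
  hence "(z - r)\<^sup>2 * (a * a) = (r * z - 1)\<^sup>2" using ab by simp
  moreover have "a * a = z ^ (2 * n)" unfolding a_def by (simp add: power_add[symmetric] mult_2)
  ultimately show ?thesis by (simp add: algebra_simps)
qed

lemma pp_trig:
  assumes s: "sin t \<noteq> 0"
  shows "pp (cos t) r k = (sin (real k * t) - r * sin ((real k - 1) * t)) / sin t"
proof (rule pp_gen)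
  show "(sin (real 0 * t) - r * sin ((real 0 - 1) * t)) / sin t = r" using s by simp
  show "(sin (real 1 * t) - r * sin ((real 1 - 1) * t)) / sin t = 1" using s by simp
  fix k
  have e: "sin (x + t) = 2 * cos t * sin x - sin (x - t)" for x
    by (simp add: sin_add sin_diff)
  have e1: "sin (real (Suc (Suc k)) * t) = 2 * cos t * sin (real (Suc k) * t) - sin (real k * t)"
    using e[of "real (Suc k) * t"] by (simp add: algebra_simps)
  have e2: "sin ((real (Suc (Suc k)) - 1) * t) = 2 * cos t * sin ((real (Suc k) - 1) * t) - sin ((real k - 1) * t)"
    using e[of "real k * t"] by (simp add: algebra_simps)
  show "(sin (real (Suc (Suc k)) * t) - r * sin ((real (Suc (Suc k)) - 1) * t)) / sin t =
         2 * cos t * ((sin (real (Suc k) * t) - r * sin ((real (Suc k) - 1) * t)) / sin t) -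
         (sin (real k * t) - r * sin ((real k - 1) * t)) / sin t"
    unfolding e1 e2 using s by (simp add: field_simps)
qed



lemma rx1: "1 < (r::real) \<Longrightarrow> 1 \<le> x \<Longrightarrow> 1 < r * x"
  using mult_less_le_imp_less[of 1 r 1 x] by simp

lemma neg_z_impossible:
  fixes z r :: real
  assumes "z < -1" "r \<ge> 0" "n \<ge> 1"
  shows "z ^ (2 * n) * (z - r)\<^sup>2 \<noteq> (r * z - 1)\<^sup>2"
proof -
  define s where "s = - z"
  have s: "s > 1" using assms s_def by simp
  have "s ^ n \<ge> s ^ 1" using s assms(3) by (intro power_increasing) auto
  hence "s ^ n * (s + r) \<ge> s * (s + r)" using s assms(2) by (intro mult_right_mono) auto
  moreover have "s * (s + r) > r * s + 1" using s assms(2)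
    using rx1[of s s] by (simp add: algebra_simps)
  ultimately have lt: "s ^ n * (s + r) > r * s + 1" by linarith
  have "(s ^ n * (s + r))\<^sup>2 > (r * s + 1)\<^sup>2"
    using lt s assms(2) by (intro power_strict_mono) auto
  moreover have "z ^ (2 * n) * (z - r)\<^sup>2 = (s ^ n * (s + r))\<^sup>2"
  proof -
    have "(s ^ n)\<^sup>2 = (s\<^sup>2) ^ n" by (simp add: power_mult[symmetric] mult.commute)
    also have "s\<^sup>2 = z\<^sup>2" by (simp add: s_def)
    also have "(z\<^sup>2) ^ n = z ^ (2 * n)" by (simp add: power_mult)
    finally have "z ^ (2 * n) = (s ^ n)\<^sup>2" by simp
    moreover have "(z - r)\<^sup>2 = (s + r)\<^sup>2" by (simp add: s_def power2_eq_square algebra_simps)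
    ultimately show ?thesis by (simp add: power_mult_distrib)
  qed
  moreover have "(r * z - 1)\<^sup>2 = (r * s + 1)\<^sup>2" unfolding s_def by (simp add: power2_eq_square algebra_simps)
  ultimately show ?thesis by linarith
qed

lemma small_rho_z_impossible:
  fixes z r :: real
  assumes "z > 1" "r \<ge> 0" "r < 1" "n \<ge> 1"
  shows "z ^ (2 * n) * (z - r)\<^sup>2 \<noteq> (r * z - 1)\<^sup>2"
proof -
  have "z ^ (2 * n) \<ge> z ^ 1" using assms by (intro power_increasing) auto
  hence z1: "z ^ (2 * n) > 1" using assms by simp
  have pos: "(z - r)\<^sup>2 > 0" using assms by simp
  have "(z - r)\<^sup>2 - (r * z - 1)\<^sup>2 = (1 - r\<^sup>2) * (z\<^sup>2 - 1)" by (simp add: power2_eq_square algebra_simps)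
  moreover have "(1 - r\<^sup>2) * (z\<^sup>2 - 1) > 0" using assms
  proof (intro mult_pos_pos)
    have "r * r \<le> r * 1" using assms by (intro mult_left_mono) auto
    thus "0 < 1 - r\<^sup>2" using assms by (simp add: power2_eq_square)
    have "1 * 1 < z * z" using assms by (intro mult_strict_mono) auto
    thus "0 < z\<^sup>2 - 1" by (simp add: power2_eq_square)
  qed
  ultimately have "(z - r)\<^sup>2 > (r * z - 1)\<^sup>2" by linarith
  moreover have "z ^ (2 * n) * (z - r)\<^sup>2 > (z - r)\<^sup>2" using z1 pos by simp
  ultimately show ?thesis by linarith
qed

lemma mid_z_case:
  fixes z r :: real
  assumes z: "1 < z" "z < r" and eq: "z ^ n * (r - z) = r * z - 1"
  shows "(1 - r\<^sup>2) / (1 + r\<^sup>2 - r * (z + 1 / z)) < - real n"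
proof (rule ccontr)
  assume "\<not> ?thesis"
  hence ge: "(1 - r\<^sup>2) / (1 + r\<^sup>2 - r * (z + 1 / z)) \<ge> - real n" by simp
  define g where "g x = real n * ln x + ln (r - x) - ln (r * x - 1)" for x
  define g' where "g' x = real n / x - 1 / (r - x) - r / (r * x - 1)" for x
  have r1: "r > 1" using z by simp
  have der: "(g has_real_derivative g' x) (at x)" if "1 \<le> x" "x \<le> z" for x
  proof -
    have "x > 0" "r - x > 0" "r * x - 1 > 0" using that z r1
      using rx1[of r x] by auto
    thus ?thesis unfolding g_def g'_def
      by (auto intro!: derivative_eq_intros simp: field_simps)
  qed
  obtain xi where xi: "1 < xi" "xi < z" "g z - g 1 = (z - 1) * g' xi"
    using MVT2[OF z(1) der] by blast
  have g1: "g 1 = 0" unfolding g_def by simp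
  have "r * z - 1 > 0" using z r1 rx1[of r z] by auto
  hence gz: "g z = 0"
  proof -
    have "ln (z ^ n * (r - z)) = ln (z ^ n) + ln (r - z)" using z by (intro ln_mult_pos) auto
    moreover have "ln (z ^ n) = real n * ln z" using z by (simp add: ln_realpow)
    ultimately show ?thesis unfolding g_def using eq by simp
  qed
  define mu where "mu x = 1 + r\<^sup>2 - r * (x + 1 / x)" for x
  have mu_eq: "mu x = (r - x) * (r * x - 1) / x" if "x > 0" for x
    unfolding mu_def using that by (simp add: field_simps power2_eq_square)
  have xip: "xi > 0" "r - xi > 0" "r * xi - 1 > 0" using xi z r1 rx1[of r xi] by auto
  have zp: "z > 0" "r - z > 0" "r * z - 1 > 0" using z r1 rx1[of r z] by auto
  have muz: "mu z > 0" using mu_eq[of z] zp by simp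
  have "mu xi - mu z = r * (z - xi) * (1 - 1 / (xi * z))"
    unfolding mu_def using xip zp by (simp add: field_simps)
  moreover have "1 / (xi * z) < 1" using xi z rx1[of xi z] by simp
  moreover have "r * (z - xi) * (1 - 1 / (xi * z)) > 0"
    using xi r1 \<open>1 / (xi * z) < 1\<close> by (intro mult_pos_pos) auto
  ultimately have "mu xi - mu z > 0" by simp
  hence "mu xi > mu z" by simp
  moreover have "1 * 1 < r * r" using r1 by (intro mult_strict_mono) auto
  ultimately have "(1 - r\<^sup>2) / mu xi > (1 - r\<^sup>2) / mu z" using muz r1
    by (intro divide_strict_left_mono_neg) (auto simp: power2_eq_square)
  hence lam: "(1 - r\<^sup>2) / mu xi > - real n" using ge unfolding mu_def by simp
  have h1: "1 / (r - xi) + r / (r * xi - 1) = (r\<^sup>2 - 1) / ((r - xi) * (r * xi - 1))"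
    using xip by (simp add: field_simps power2_eq_square)
  have h2: "(1 - r\<^sup>2) / ((r - xi) * (r * xi - 1) / xi) / xi = - ((r\<^sup>2 - 1) / ((r - xi) * (r * xi - 1)))"
  proof -
    have "a / (A / xi) / xi = a / A" for a A using xip(1) by (cases "A = 0") (simp_all add: field_simps)
    moreover have "(1 - r\<^sup>2) / A = - ((r\<^sup>2 - 1) / A)" for A
      by (simp add: minus_divide_left)
    ultimately show ?thesis by metis
  qed
  have "g' xi = (real n + (1 - r\<^sup>2) / mu xi) / xi"
    unfolding mu_eq[OF xip(1)] add_divide_distrib h2
    unfolding g'_def using h1 by (simp add: algebra_simps)
  hence "g' xi > 0" using lam xip by simp
  hence "g z - g 1 > 0" using xi z by simp
  thus False using g1 gz by simp
qed



lemma mul_helper: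
  fixes X M a b P Q :: real
  assumes "X = a * (P / M) - b * (Q / M)" "M \<noteq> 0"
  shows "M * X = a * P - b * Q"
proof -
  have "M * X = a * (M * (P / M)) - b * (M * (Q / M))" unfolding assms(1) by (simp add: right_diff_distrib mult.left_commute)
  thus ?thesis using assms(2) by simp
qed

lemma trig_eq:
  fixes r t :: real and n :: nat
  assumes r: "r > 1" and n: "n \<ge> 1"
  shows "sin ((real n + 1) * t) - 2 * r * sin (real n * t) + r\<^sup>2 * sin ((real n - 1) * t)
    = (1 + r\<^sup>2 - 2 * r * cos t) * sin ((real n - 1) * t - 2 * arctan (sin t / (r - cos t)))"
proof -
  define A where "A = (real n - 1) * t"
  define c where "c = cos t"
  define s where "s = sin t"
  define x where "x = s / (r - c)"
  have rc: "r - c > 0" using r cos_le_one[of t] unfolding c_def by linarith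
  have sc: "s\<^sup>2 + c\<^sup>2 = 1" unfolding s_def c_def by simp
  have mu: "1 + r\<^sup>2 - 2 * r * c = (r - c)\<^sup>2 + s\<^sup>2" using sc by (simp add: power2_eq_square algebra_simps)
  have mupos: "(r - c)\<^sup>2 + s\<^sup>2 > 0" using rc by (intro add_pos_nonneg) auto
  have sq: "sqrt (1 + x\<^sup>2) ^ 2 = 1 + x\<^sup>2" by (simp add: add_pos_nonneg)
  have c2: "cos (2 * arctan x) = ((r - c)\<^sup>2 - s\<^sup>2) / ((r - c)\<^sup>2 + s\<^sup>2)"
  proof -
    have "cos (2 * arctan x) = (cos (arctan x))\<^sup>2 - (sin (arctan x))\<^sup>2" by (simp add: cos_double)
    also have "\<dots> = (1 - x\<^sup>2) / (1 + x\<^sup>2)" unfolding sin_arctan cos_arctan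
      by (simp add: power_divide sq diff_divide_distrib)
    also have "\<dots> = ((r - c)\<^sup>2 - s\<^sup>2) / ((r - c)\<^sup>2 + s\<^sup>2)"
    proof -
      have D: "(r - c)\<^sup>2 > 0" using rc by simp
      have x2: "x\<^sup>2 = s\<^sup>2 / (r - c)\<^sup>2" unfolding x_def by (simp add: power_divide)
      have "1 - x\<^sup>2 = ((r - c)\<^sup>2 - s\<^sup>2) / (r - c)\<^sup>2" unfolding x2 using D by (simp add: field_simps)
      moreover have "1 + x\<^sup>2 = ((r - c)\<^sup>2 + s\<^sup>2) / (r - c)\<^sup>2" unfolding x2 using D by (simp add: field_simps)
      ultimately show ?thesis using D by simp
    qed
    finally show ?thesis .
  qed
  have s2: "sin (2 * arctan x) = 2 * s * (r - c) / ((r - c)\<^sup>2 + s\<^sup>2)"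
  proof -
    have "sin (2 * arctan x) = 2 * sin (arctan x) * cos (arctan x)" by (simp add: sin_double)
    also have "\<dots> = 2 * x / (1 + x\<^sup>2)" unfolding sin_arctan cos_arctan
      by (simp add: sq[unfolded power2_eq_square] power2_eq_square)
    also have "\<dots> = 2 * s * (r - c) / ((r - c)\<^sup>2 + s\<^sup>2)"
    proof -
      have D: "(r - c)\<^sup>2 > 0" using rc by simp
      have x2: "x\<^sup>2 = s\<^sup>2 / (r - c)\<^sup>2" unfolding x_def by (simp add: power_divide)
      have "1 + x\<^sup>2 = ((r - c)\<^sup>2 + s\<^sup>2) / (r - c)\<^sup>2" unfolding x2 using D by (simp add: field_simps)
      hence "2 * x / (1 + x\<^sup>2) = 2 * x * (r - c)\<^sup>2 / ((r - c)\<^sup>2 + s\<^sup>2)" using D by simp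
      also have "2 * x * (r - c)\<^sup>2 = 2 * s * (r - c)" unfolding x_def using rc by (simp add: power2_eq_square)
      finally show ?thesis .
    qed
    finally show ?thesis .
  qed
  have e1: "sin ((real n + 1) * t) = sin A * (c\<^sup>2 - s\<^sup>2) + cos A * (2 * s * c)"
  proof -
    have "(real n + 1) * t = A + 2 * t" unfolding A_def by (simp add: algebra_simps)
    hence "sin ((real n + 1) * t) = sin A * cos (2 * t) + cos A * sin (2 * t)" by (simp add: sin_add)
    moreover have "cos (2 * t) = c\<^sup>2 - s\<^sup>2" unfolding c_def s_def by (rule cos_double)
    moreover have "sin (2 * t) = 2 * s * c" unfolding c_def s_def by (rule sin_double)
    ultimately show ?thesis by simp
  qed
  have e2: "sin (real n * t) = sin A * c + cos A * s"
  proof -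
    have "real n * t = A + t" unfolding A_def by (simp add: algebra_simps)
    thus ?thesis by (simp add: sin_add c_def s_def)
  qed
  have "sin (A - 2 * arctan x) = sin A * cos (2 * arctan x) - cos A * sin (2 * arctan x)"
    by (simp add: sin_diff)
  hence "((r - c)\<^sup>2 + s\<^sup>2) * sin (A - 2 * arctan x) = sin A * ((r - c)\<^sup>2 - s\<^sup>2) - cos A * (2 * s * (r - c))"
    unfolding c2 s2 using mupos by (intro mul_helper) auto
  moreover have "sin ((real n + 1) * t) - 2 * r * sin (real n * t) + r\<^sup>2 * sin A
     = sin A * ((r - c)\<^sup>2 - s\<^sup>2) - cos A * (2 * s * (r - c))"
    unfolding e1 e2 by (simp add: power2_eq_square algebra_simps)
  ultimately have "sin ((real n + 1) * t) - 2 * r * sin (real n * t) + r\<^sup>2 * sin A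
     = (1 + r\<^sup>2 - 2 * r * c) * sin (A - 2 * arctan x)" unfolding mu by simp
  thus ?thesis unfolding A_def x_def c_def s_def .
qed



lemma hd_helper:
  fixes M r c n :: real
  assumes "M = 1 + r\<^sup>2 - 2 * r * c" "M \<noteq> 0"
  shows "(n - 1) - 2 * ((r * c - 1) / M) = n - (r\<^sup>2 - 1) / M"
proof -
  have "(r\<^sup>2 - 1) / M = (2 * (r * c - 1) + M) / M" using assms(1) by (simp add: algebra_simps)
  also have "\<dots> = 2 * ((r * c - 1) / M) + 1" using assms(2) by (simp add: add_divide_distrib)
  finally show ?thesis by simp
qed

lemma h_deriv:
  fixes r x :: real
  assumes r: "r > 1"
  shows "((\<lambda>x. (real n - 1) * x - 2 * arctan (sin x / (r - cos x))) has_real_derivative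
          (real n - (r\<^sup>2 - 1) / (1 + r\<^sup>2 - 2 * r * cos x))) (at x)"
proof -
  have rc: "r - cos x > 0" using r cos_le_one[of x] by linarith
  have "((\<lambda>x. (real n - 1) * x - 2 * arctan (sin x / (r - cos x))) has_real_derivative
          ((real n - 1) - 2 * (inverse (1 + (sin x / (r - cos x))\<^sup>2) *
             ((cos x * (r - cos x) - sin x * sin x) / (r - cos x)\<^sup>2)))) (at x)"
    using rc by (auto intro!: derivative_eq_intros simp: power2_eq_square field_simps)
  moreover have "(real n - 1) - 2 * (inverse (1 + (sin x / (r - cos x))\<^sup>2) *
             ((cos x * (r - cos x) - sin x * sin x) / (r - cos x)\<^sup>2))
       = real n - (r\<^sup>2 - 1) / (1 + r\<^sup>2 - 2 * r * cos x)"
  proof -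
    define c where "c = cos x"
    define s where "s = sin x"
    have sc: "s * s = 1 - c * c" unfolding s_def c_def by (simp add: sin_squared_eq[unfolded power2_eq_square])
    have rc': "r - c > 0" using rc c_def by simp
    have mu: "1 + r\<^sup>2 - 2 * r * c = (r - c)\<^sup>2 + s\<^sup>2" using sc by (simp add: power2_eq_square algebra_simps)
    have mupos: "(r - c)\<^sup>2 + s\<^sup>2 > 0" using rc' by (intro add_pos_nonneg) auto
    have i1: "inverse (1 + (s / (r - c))\<^sup>2) = (r - c)\<^sup>2 / ((r - c)\<^sup>2 + s\<^sup>2)"
      using rc' by (simp add: power_divide field_simps)
    have eq1: "inverse (1 + (s / (r - c))\<^sup>2) * ((c * (r - c) - s * s) / (r - c)\<^sup>2) = (r * c - 1) / ((r - c)\<^sup>2 + s\<^sup>2)"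
    proof -
      have D: "(r - c)\<^sup>2 \<noteq> 0" using rc' by simp
      have "(r - c)\<^sup>2 / ((r - c)\<^sup>2 + s\<^sup>2) * ((c * (r - c) - s * s) / (r - c)\<^sup>2) = (c * (r - c) - s * s) / ((r - c)\<^sup>2 + s\<^sup>2)"
        using D by simp
      moreover have "c * (r - c) - s * s = r * c - 1" using sc by (simp add: algebra_simps)
      ultimately show ?thesis unfolding i1 by simp
    qed
    have hh: "(real n - 1) - 2 * ((r * c - 1) / ((r - c)\<^sup>2 + s\<^sup>2)) = real n - (r\<^sup>2 - 1) / ((r - c)\<^sup>2 + s\<^sup>2)"
      by (rule hd_helper[OF mu[symmetric]]) (use mupos in linarith)
    have "(real n - 1) - 2 * (inverse (1 + (s / (r - c))\<^sup>2) * ((c * (r - c) - s * s) / (r - c)\<^sup>2))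
        = real n - (r\<^sup>2 - 1) / ((r - c)\<^sup>2 + s\<^sup>2)"
      unfolding eq1 by (rule hh)
    thus ?thesis using mu unfolding c_def s_def by simp
  qed
  ultimately show ?thesis by metis
qed


lemma trig_case:
  fixes r t :: real and n :: nat
  assumes r: "r > 1" and n: "n \<ge> 1" and t: "0 < t" "t < pi"
    and E: "sin ((real n + 1) * t) - 2 * r * sin (real n * t) + r\<^sup>2 * sin ((real n - 1) * t) = 0"
  shows "(r\<^sup>2 - 1) / (1 + r\<^sup>2 - 2 * r * cos t) \<le> real n"
proof (rule ccontr)
  assume "\<not> ?thesis"
  hence gt: "(r\<^sup>2 - 1) / (1 + r\<^sup>2 - 2 * r * cos t) > real n" by simp
  define h where "h x = (real n - 1) * x - 2 * arctan (sin x / (r - cos x))" for x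
  define mu where "mu x = 1 + r\<^sup>2 - 2 * r * cos x" for x
  have mupos: "mu x > 0" for x
  proof -
    have "r - cos x > 0" using r cos_le_one[of x] by linarith
    hence "(r - cos x)\<^sup>2 + (sin x)\<^sup>2 > 0" by (intro add_pos_nonneg) auto
    moreover have "mu x = (r - cos x)\<^sup>2 + (sin x)\<^sup>2" unfolding mu_def
      using sin_cos_squared_add[of x] by (simp add: power2_eq_square algebra_simps)
    ultimately show ?thesis by simp
  qed
  have "mu t * sin (h t) = 0" using trig_eq[OF r n, of t] E unfolding h_def mu_def by simp
  hence "sin (h t) = 0" using mupos[of t] by simp
  then obtain i :: int where i: "h t = real_of_int i * pi" by (auto simp: sin_zero_iff_int2)
  have hlow: "h t > - pi"
  proof -
    have "(real n - 1) * t \<ge> 0" using n t by simp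
    moreover have "arctan (sin t / (r - cos t)) < pi / 2" by (rule arctan_ubound)
    ultimately show ?thesis unfolding h_def by linarith
  qed
  have der: "(h has_real_derivative (real n - (r\<^sup>2 - 1) / mu x)) (at x)" for x
    unfolding h_def mu_def by (rule h_deriv[OF r])
  obtain xi where xi: "0 < xi" "xi < t" "h t - h 0 = (t - 0) * (real n - (r\<^sup>2 - 1) / mu xi)"
    using MVT2[OF t(1), of h "\<lambda>x. real n - (r\<^sup>2 - 1) / mu x"] der by blast
  have "cos t < cos xi" using xi t by (intro cos_monotone_0_pi) auto
  hence "mu xi < mu t" unfolding mu_def using r by simp
  moreover have "r\<^sup>2 - 1 > 0" using r by (simp add: power2_eq_square) (use rx1[of r r] r in simp)
  ultimately have "(r\<^sup>2 - 1) / mu xi > (r\<^sup>2 - 1) / mu t" using mupos[of xi]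
    by (intro divide_strict_left_mono) auto
  hence "real n - (r\<^sup>2 - 1) / mu xi < 0" using gt unfolding mu_def by simp
  hence "h t - h 0 < 0" using xi t by (simp add: mult_pos_neg)
  moreover have "h 0 = 0" unfolding h_def by simp
  ultimately have "h t < 0" by simp
  hence i1: "real_of_int i < 0" using i by (simp add: mult_less_0_iff)
  have "(-1) * pi < real_of_int i * pi" using i hlow by simp
  hence "-1 < real_of_int i" by (simp only: mult_less_cancel_right_pos[OF pi_gt_zero])
  hence "-1 < i" by linarith
  moreover have "i < 0" using i1 by linarith
  ultimately show False by linarith
qed


lemma reduce:
  fixes v :: "real vec"
  assumes n: "n \<ge> 2" and r: "r > 0" "r \<noteq> 1"
    and v: "v \<in> carrier_vec n" "v \<noteq> 0\<^sub>v n" "KMS n r *\<^sub>v v = lam \<cdot>\<^sub>v v"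
  shows "lam \<noteq> 0 \<and> pp ((1 + r\<^sup>2 - (1 - r\<^sup>2) / lam) / (2 * r)) r (Suc n) = r * pp ((1 + r\<^sup>2 - (1 - r\<^sup>2) / lam) / (2 * r)) r n
    \<and> (\<forall>i<n. (\<Sum>j<n. r ^ nat \<bar>int i - int j\<bar> * pp ((1 + r\<^sup>2 - (1 - r\<^sup>2) / lam) / (2 * r)) r (Suc j))
          = lam * pp ((1 + r\<^sup>2 - (1 - r\<^sup>2) / lam) / (2 * r)) r (Suc i))"
proof -
  define c where "c = (1 + r\<^sup>2 - (1 - r\<^sup>2) / lam) / (2 * r)"
  define u where "u j = v $ j" for j
  define S where "S i = (\<Sum>j<n. r ^ nat \<bar>int i - int j\<bar> * u j)" for i
  obtain k where k: "n = Suc (Suc k)" using n by (metis add_2_eq_Suc le_Suc_ex)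
  have S: "S i = lam * u i" if "i < n" for i unfolding S_def u_def using eig_comp[OF v(1) v(3) that] .
  have ex: "\<exists>i<n. u i \<noteq> 0"
  proof (rule ccontr)
    assume "\<not> ?thesis"
    hence "v = 0\<^sub>v n" using v(1) unfolding u_def by (intro eq_vecI) auto
    thus False using v(2) by simp
  qed
  have r2: "1 - r\<^sup>2 \<noteq> 0"
  proof
    assume "1 - r\<^sup>2 = 0"
    hence "r = 1 \<or> r = -1" by (simp add: power2_eq_1_iff)
    hence "r = 1" using r(1) by auto
    thus False using r(2) by simp
  qed
  have i1: "S 0 - r * S 1 = (1 - r\<^sup>2) * u 0" unfolding S_def using I1[where u=u and n=n and r=r] n by simp
  have i2: "S (Suc k) - r * S k = (1 - r\<^sup>2) * u (Suc k)" unfolding S_def using I2[where u=u and n=n and r=r] n k by simp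
  have i3: "(1 + r\<^sup>2) * S i - r * S (i - 1) - r * S (i + 1) = (1 - r\<^sup>2) * u i" if "1 \<le> i" "i + 1 < n" for i
    unfolding S_def using I3[OF that, where u=u and r=r] .
  have lam0: "lam \<noteq> 0"
  proof
    assume l0: "lam = 0"
    have "u i = 0" if ilt: "i < n" for i
    proof -
      consider "i = 0" | "i = Suc k" | "1 \<le> i \<and> i + 1 < n" using ilt k by linarith
      thus ?thesis
      proof cases
        case 1 thus ?thesis using i1 S[of 0] S[of 1] l0 r2 k by simp
      next
        case 2 thus ?thesis using i2 S[of k] S[of "Suc k"] l0 r2 k by simp
      next
        case 3
        hence "i - 1 < n" "i < n" "i + 1 < n" by auto
        thus ?thesis using 3 i3[of i] S[of i] S[of "i - 1"] S[of "i + 1"] l0 r2 by simp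
      qed
    qed
    thus False using ex by auto
  qed
  define mu where "mu = (1 - r\<^sup>2) / lam"
  have cr: "2 * c * r = 1 + r\<^sup>2 - mu" unfolding c_def mu_def using r by simp
  have E1: "u 0 - r * u 1 = mu * u 0"
  proof -
    have "lam * (u 0 - r * u 1) = (1 - r\<^sup>2) * u 0" using i1 S[of 0] S[of 1] k by (simp add: algebra_simps)
    thus ?thesis unfolding mu_def using lam0 by (simp add: field_simps)
  qed
  have E2: "u (Suc k) - r * u k = mu * u (Suc k)"
  proof -
    have "lam * (u (Suc k) - r * u k) = (1 - r\<^sup>2) * u (Suc k)" using i2 S[of k] S[of "Suc k"] k by (simp add: algebra_simps)
    thus ?thesis unfolding mu_def using lam0 by (simp add: field_simps)
  qed
  have E3: "u (Suc (Suc i)) = 2 * c * u (Suc i) - u i" if "Suc (Suc i) < n" for i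
  proof -
    have "lam * ((1 + r\<^sup>2) * u (Suc i) - r * u i - r * u (Suc (Suc i))) = (1 - r\<^sup>2) * u (Suc i)"
      using i3[of "Suc i"] S[of i] S[of "Suc i"] S[of "Suc (Suc i)"] that by (simp add: algebra_simps)
    hence "(1 + r\<^sup>2) * u (Suc i) - r * u i - r * u (Suc (Suc i)) = mu * u (Suc i)"
      unfolding mu_def using lam0 by (simp add: field_simps)
    hence "r * u (Suc (Suc i)) = (1 + r\<^sup>2 - mu) * u (Suc i) - r * u i" by (simp add: algebra_simps)
    also have "\<dots> = (2 * c * r) * u (Suc i) - r * u i" unfolding cr ..
    also have "\<dots> = r * (2 * c * u (Suc i) - u i)" by (simp add: algebra_simps)
    finally have "r * u (Suc (Suc i)) = r * (2 * c * u (Suc i) - u i)" .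
    thus ?thesis using r by simp
  qed
  have U: "u i = u 0 * pp c r (Suc i)" if "i < n" for i
    using that
  proof (induction i rule: less_induct)
    case (less i)
    show ?case
    proof (cases i)
      case 0 thus ?thesis by simp
    next
      case (Suc m)
      show ?thesis
      proof (cases m)
        case 0
        have "2 * c - r = (1 - mu) / r" using cr r by (simp add: field_simps power2_eq_square)
        moreover have "u 1 = (1 - mu) / r * u 0" using E1 r by (simp add: field_simps)
        ultimately show ?thesis using Suc 0 by simp
      next
        case (Suc j)
        have "u i = 2 * c * u (Suc j) - u j" using E3[of j] less.prems \<open>i = Suc m\<close> Suc by simp
        also have "\<dots> = u 0 * (2 * c * pp c r (Suc (Suc j)) - pp c r (Suc j))"
        proof -
          have lt: "Suc j < i" "j < i" "Suc j < n" "j < n" using less.prems \<open>i = Suc m\<close> Suc by auto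
          have h1: "u (Suc j) = u 0 * pp c r (Suc (Suc j))" by (rule less.IH[OF lt(1) lt(3)])
          have h2: "u j = u 0 * pp c r (Suc j)" by (rule less.IH[OF lt(2) lt(4)])
          show ?thesis unfolding h1 h2 by (simp add: algebra_simps del: pp.simps)
        qed
        finally show ?thesis using \<open>i = Suc m\<close> Suc by simp
      qed
    qed
  qed
  have u0: "u 0 \<noteq> 0"
  proof
    assume z: "u 0 = 0"
    have "u i = 0" if "i < n" for i using U[OF that] z by simp
    thus False using ex by auto
  qed
  have end1: "pp c r n - r * pp c r (Suc k) = mu * pp c r n"
  proof -
    have "u 0 * (pp c r n - r * pp c r (Suc k)) = u 0 * (mu * pp c r n)"
      using E2 U[of "Suc k"] U[of k] k by (simp add: algebra_simps)
    thus ?thesis using u0 by simp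
  qed
  have "r * pp c r (Suc n) = r * (r * pp c r n)"
  proof -
    have "pp c r (Suc n) = 2 * c * pp c r n - pp c r (Suc k)" using k by simp
    hence "r * pp c r (Suc n) = r * (2 * c * pp c r n - pp c r (Suc k))" by (simp only:)
    also have "\<dots> = (2 * c * r) * pp c r n - r * pp c r (Suc k)" by (simp add: algebra_simps del: pp.simps)
    finally have "r * pp c r (Suc n) = (2 * c * r) * pp c r n - r * pp c r (Suc k)" .
    also have "\<dots> = r * (r * pp c r n)" using end1 unfolding cr by (simp add: algebra_simps power2_eq_square)
    finally show ?thesis .
  qed
  hence endc: "pp c r (Suc n) = r * pp c r n" using r by simp
  have sums: "(\<Sum>j<n. r ^ nat \<bar>int i - int j\<bar> * pp c r (Suc j)) = lam * pp c r (Suc i)" if "i < n" for i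
  proof -
    have "u 0 * (\<Sum>j<n. r ^ nat \<bar>int i - int j\<bar> * pp c r (Suc j)) = (\<Sum>j<n. r ^ nat \<bar>int i - int j\<bar> * u j)"
      unfolding sum_distrib_left
    proof (rule sum.cong[OF refl])
      fix j assume "j \<in> {..<n}"
      hence uj: "u j = u 0 * pp c r (Suc j)" by (intro U) simp
      show "u 0 * (r ^ nat \<bar>int i - int j\<bar> * pp c r (Suc j)) = r ^ nat \<bar>int i - int j\<bar> * u j"
        unfolding uj by (simp only: mult_ac)
    qed
    also have "\<dots> = u 0 * (lam * pp c r (Suc i))" using S[OF that] U[OF that] unfolding S_def by simp
    finally show ?thesis using u0 by simp
  qed
  have allsums: "\<forall>i<n. (\<Sum>j<n. r ^ nat \<bar>int i - int j\<bar> * pp c r (Suc j)) = lam * pp c r (Suc i)"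
    using sums by (intro allI impI)
  show ?thesis using lam0 endc allsums unfolding c_def by (intro conjI) (assumption+)
qed


lemma row_bound:
  fixes v :: "real vec"
  assumes r: "0 \<le> r" "r \<le> 1" and v: "v \<in> carrier_vec n" "v \<noteq> 0\<^sub>v n" "KMS n r *\<^sub>v v = lam \<cdot>\<^sub>v v"
  shows "\<bar>lam\<bar> \<le> real n"
proof -
  define u where "u j = v $ j" for j
  have ex: "\<exists>i<n. u i \<noteq> 0"
  proof (rule ccontr)
    assume "\<not> ?thesis"
    hence "v = 0\<^sub>v n" using v(1) unfolding u_def by (intro eq_vecI) auto
    thus False using v(2) by simp
  qed
  then obtain i0 where "i0 < n" by blast
  hence ne: "(\<lambda>j. \<bar>u j\<bar>) ` {..<n} \<noteq> {}" by auto
  define M where "M = Max ((\<lambda>j. \<bar>u j\<bar>) ` {..<n})"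
  have "M \<in> (\<lambda>j. \<bar>u j\<bar>) ` {..<n}" unfolding M_def using ne by (intro Max_in) auto
  then obtain i where i: "i < n" "\<bar>u i\<bar> = M" by auto
  have ge: "\<bar>u j\<bar> \<le> \<bar>u i\<bar>" if "j < n" for j unfolding i(2) M_def using that by (intro Max_ge) auto
  have pos: "\<bar>u i\<bar> > 0"
  proof -
    obtain j where "j < n" "u j \<noteq> 0" using ex by blast
    thus ?thesis using ge[of j] by simp
  qed
  have "\<bar>lam\<bar> * \<bar>u i\<bar> = \<bar>\<Sum>j<n. r ^ nat \<bar>int i - int j\<bar> * u j\<bar>"
    using eig_comp[OF v(1) v(3) i(1)] unfolding u_def by (simp add: abs_mult)
  also have "\<dots> \<le> (\<Sum>j<n. \<bar>r ^ nat \<bar>int i - int j\<bar> * u j\<bar>)" by (rule sum_abs)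
  also have "\<dots> \<le> (\<Sum>j<n. \<bar>u i\<bar>)"
  proof (rule sum_mono)
    fix j assume "j \<in> {..<n}"
    hence "\<bar>u j\<bar> \<le> \<bar>u i\<bar>" using ge by simp
    moreover have "r ^ nat \<bar>int i - int j\<bar> \<le> 1" "r ^ nat \<bar>int i - int j\<bar> \<ge> 0" using r by (auto intro: power_le_one)
    note cc = calculation this
    show "\<bar>r ^ nat \<bar>int i - int j\<bar> * u j\<bar> \<le> \<bar>u i\<bar>"
    proof -
      have "r ^ nat \<bar>int i - int j\<bar> * \<bar>u j\<bar> \<le> 1 * \<bar>u i\<bar>"
        using cc by (intro mult_mono) auto
      thus ?thesis using cc by (simp add: abs_mult)
    qed
  qed
  also have "\<dots> = real n * \<bar>u i\<bar>" by simp
  finally show ?thesis using pos by simp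
qed

lemma perron:
  fixes w :: "nat \<Rightarrow> real"
  assumes r: "r > 1" and n: "n \<ge> 2" and w: "\<And>j. j < n \<Longrightarrow> w j > 0"
    and eq: "\<And>i. i < n \<Longrightarrow> (\<Sum>j<n. r ^ nat \<bar>int i - int j\<bar> * w j) = lam * w i"
  shows "lam > real n"
proof -
  have "0 \<in> {..<n}" using n by simp
  hence ne: "w ` {..<n} \<noteq> {}" by blast
  define M where "M = Min (w ` {..<n})"
  have "M \<in> w ` {..<n}" unfolding M_def using ne by (intro Min_in) auto
  then obtain i where i: "i < n" "w i = M" by auto
  have le: "w i \<le> w j" if "j < n" for j unfolding i(2) M_def using that by (intro Min_le) auto
  define j0 :: nat where "j0 = (if i = 0 then 1 else 0)"
  have j0: "j0 < n" "j0 \<noteq> i" unfolding j0_def using n i by auto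
  have "(\<Sum>j<n. w i) < (\<Sum>j<n. r ^ nat \<bar>int i - int j\<bar> * w j)"
  proof (rule sum_strict_mono_ex1)
    show "finite {..<n}" by simp
    show "\<forall>j\<in>{..<n}. w i \<le> r ^ nat \<bar>int i - int j\<bar> * w j"
    proof
      fix j assume "j \<in> {..<n}"
      hence "w i \<le> w j" "w j > 0" using le w by auto
      moreover have "1 \<le> r ^ nat \<bar>int i - int j\<bar>" using r by (intro one_le_power) simp
      note cc = calculation this
      show "w i \<le> r ^ nat \<bar>int i - int j\<bar> * w j"
      proof -
        have "1 * w j \<le> r ^ nat \<bar>int i - int j\<bar> * w j" using cc by (intro mult_right_mono) auto
        hence "w j \<le> r ^ nat \<bar>int i - int j\<bar> * w j" by simp
        thus ?thesis using cc by linarith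
      qed
    qed
    show "\<exists>j\<in>{..<n}. w i < r ^ nat \<bar>int i - int j\<bar> * w j"
    proof (rule bexI[of _ j0])
      have "w i \<le> w j0" "w j0 > 0" using le w j0 by auto
      moreover have "1 < r ^ nat \<bar>int i - int j0\<bar>" using r j0 by (intro one_less_power) auto
      note cc = calculation this
      show "w i < r ^ nat \<bar>int i - int j0\<bar> * w j0"
      proof -
        have "1 * w j0 < r ^ nat \<bar>int i - int j0\<bar> * w j0" using cc by (intro mult_strict_right_mono) auto
        hence "w j0 < r ^ nat \<bar>int i - int j0\<bar> * w j0" by simp
        thus ?thesis using cc by linarith
      qed
      show "j0 \<in> {..<n}" using j0 by simp
    qed
  qed
  hence "real n * w i < lam * w i" using eq[OF i(1)] by simp
  thus ?thesis using w[OF i(1)] by simp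
qed

lemma pp_pos:
  assumes "z > r" "r > 1" "2 * c = z + 1 / z"
  shows "pp c r k > 0"
proof -
  have z: "z \<noteq> 0" "z\<^sup>2 \<noteq> 1" "z > 1" using assms by (auto simp: power2_eq_square) (use rx1[of z z] in auto)
  have "z\<^sup>2 - 1 > 0" using z rx1[of z z] by (simp add: power2_eq_square)
  moreover have "(z - r) * z ^ k > 0" using assms z by simp
  moreover have "(r * z - 1) * z * (1 / z) ^ k > 0" using assms z rx1[of r z] by simp
  ultimately show ?thesis unfolding pp_z[OF z(1,2) assms(3)] by simp
qed

lemma pp_one: "pp 1 r k = r + real k * (1 - r)"
  by (rule pp_gen) (simp_all add: algebra_simps)


lemma range_of_c:
  fixes r lam c :: real
  assumes r: "r > 0" "r \<noteq> 1" and lam: "lam \<noteq> 0" and c: "c = (1 + r\<^sup>2 - (1 - r\<^sup>2) / lam) / (2 * r)"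
  shows "lam \<in> sigma_range r \<longleftrightarrow> -1 \<le> c \<and> c \<le> 1"
proof -
  have r2: "1 - r\<^sup>2 \<noteq> 0"
  proof
    assume "1 - r\<^sup>2 = 0"
    hence "r = 1 \<or> r = -1" by (simp add: power2_eq_1_iff)
    thus False using r by auto
  qed
  have "2 * r * c = 1 + r\<^sup>2 - (1 - r\<^sup>2) / lam" unfolding c using r by simp
  hence mu: "(1 - r\<^sup>2) / lam = 1 - 2 * r * c + r\<^sup>2" by linarith
  show ?thesis
  proof
    assume "lam \<in> sigma_range r"
    then obtain t where t: "lam = sigma r t" unfolding sigma_range_def by auto
    have D: "1 - 2 * r * cos t + r\<^sup>2 \<noteq> 0"
    proof -
      have "1 - 2 * r * cos t + r\<^sup>2 = (r - cos t)\<^sup>2 + (sin t)\<^sup>2"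
        using sin_cos_squared_add[of t] by (simp add: power2_eq_square algebra_simps)
      moreover have "(r - cos t)\<^sup>2 + (sin t)\<^sup>2 > 0"
      proof (cases "sin t = 0")
        case True
        hence "cos t = 1 \<or> cos t = -1" using sin_cos_squared_add[of t] by (simp add: power2_eq_1_iff)
        hence "r - cos t \<noteq> 0" using r by auto
        thus ?thesis by (simp add: add_pos_nonneg)
      next
        case False thus ?thesis by (simp add: add_nonneg_pos)
      qed
      ultimately show ?thesis by linarith
    qed
    have "(1 - r\<^sup>2) / lam = 1 - 2 * r * cos t + r\<^sup>2" unfolding t sigma_def using D r2 by simp
    hence "2 * r * c = 2 * r * cos t" using mu by simp
    hence "c = cos t" using r by simp
    thus "-1 \<le> c \<and> c \<le> 1" by simp
  next
    assume c1: "-1 \<le> c \<and> c \<le> 1"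
    define t where "t = arccos c"
    have t: "cos t = c" "0 \<le> t" "t \<le> pi" unfolding t_def using c1 arccos_bounded[of c] by auto
    have "sigma r t = (1 - r\<^sup>2) / ((1 - r\<^sup>2) / lam)" unfolding sigma_def mu t(1) ..
    also have "\<dots> = lam" using r2 lam by simp
    finally have "lam = sigma r t" by simp
    moreover have "t \<in> {-pi<..pi}" proof - have "-pi < t" using t(2) pi_gt_zero by linarith thus ?thesis using t(3) by simp qed
    ultimately show "lam \<in> sigma_range r" unfolding sigma_range_def by auto
  qed
qed

lemma z_big:
  fixes c :: real assumes "c > 1"
  obtains z where "z > 1" "2 * c = z + 1 / z"
proof -
  define s where "s = sqrt (c\<^sup>2 - 1)"
  have "c * c > 1" using rx1[of c c] assms by simp
  hence cc: "c\<^sup>2 - 1 \<ge> 0" by (simp add: power2_eq_square)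
  have s: "s \<ge> 0" "s\<^sup>2 = c\<^sup>2 - 1" unfolding s_def using cc by (auto simp: real_sqrt_pow2)
  have z1: "c + s > 1" using assms s by linarith
  have "(c + s) * (c - s) = 1" using s by (simp add: power2_eq_square algebra_simps)
  hence "1 / (c + s) = c - s" using z1 by (simp add: field_simps)
  hence "2 * c = (c + s) + 1 / (c + s)" by simp
  thus ?thesis using that z1 by blast
qed

lemma z_neg:
  fixes c :: real assumes "c < -1"
  obtains z where "z < -1" "2 * c = z + 1 / z"
proof -
  obtain z where z: "z > 1" "2 * (-c) = z + 1 / z" using z_big[of "-c"] assms by auto
  have "-z < -1" "2 * c = (-z) + 1 / (-z)" using z by auto
  thus ?thesis using that by blast
qed


lemma sq_eq_pos: "(a::real) > 0 \<Longrightarrow> b > 0 \<Longrightarrow> a\<^sup>2 = b\<^sup>2 \<Longrightarrow> a = b"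
  by (simp add: power2_eq_iff_nonneg)

lemma big_case:
  fixes v :: "real vec"
  assumes n: "n \<ge> 2" and r: "r > 1"
    and v: "v \<in> carrier_vec n" "v \<noteq> 0\<^sub>v n" "KMS n r *\<^sub>v v = lam \<cdot>\<^sub>v v"
  shows "lam \<notin> sigma_range r \<longleftrightarrow> \<bar>lam\<bar> > real n"
proof -
  have r0: "r > 0" "r \<noteq> 1" using r by auto
  define c where "c = (1 + r\<^sup>2 - (1 - r\<^sup>2) / lam) / (2 * r)"
  have red: "lam \<noteq> 0" "pp c r (Suc n) = r * pp c r n"
    "\<And>i. i < n \<Longrightarrow> (\<Sum>j<n. r ^ nat \<bar>int i - int j\<bar> * pp c r (Suc j)) = lam * pp c r (Suc i)"
    using reduce[OF n r0 v] unfolding c_def[symmetric] by auto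
  have rng: "lam \<in> sigma_range r \<longleftrightarrow> -1 \<le> c \<and> c \<le> 1"
    by (rule range_of_c[OF r0 red(1) c_def])
  have rr: "r * r > 1" using rx1[of r r] r by simp
  have r2: "r\<^sup>2 - 1 > 0" using rr by (simp add: power2_eq_square)
  define mu where "mu = (1 - r\<^sup>2) / lam"
  have "2 * r * c = 1 + r\<^sup>2 - (1 - r\<^sup>2) / lam" unfolding c_def using r by simp
  hence mu_c: "mu = 1 + r\<^sup>2 - 2 * r * c" unfolding mu_def by linarith
  have mu0: "mu \<noteq> 0" unfolding mu_def using red(1) r2 by simp
  have lam_mu: "lam = (1 - r\<^sup>2) / mu" unfolding mu_def using red(1) r2 by simp
  have abs_lam: "\<bar>lam\<bar> = (r\<^sup>2 - 1) / mu" if "mu > 0"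
    unfolding lam_mu using that r2 by (simp add: abs_divide)
  have inr: "\<bar>lam\<bar> \<le> real n" if c1: "-1 \<le> c" "c \<le> 1"
  proof -
    have mupos: "mu > 0"
    proof -
      have "mu = (r - c)\<^sup>2 + (1 - c * c)" unfolding mu_c by (simp add: power2_eq_square algebra_simps)
      moreover have "(r - c)\<^sup>2 > 0" using c1 r by simp
      moreover have "1 - c * c \<ge> 0" using c1 by (simp add: abs_square_le_1[unfolded power2_eq_square] abs_le_iff)
      ultimately show ?thesis by linarith
    qed
    consider "c = -1" | "c = 1" | "-1 < c \<and> c < 1" using c1 by linarith
    thus ?thesis
    proof cases
      case 1
      have "mu = (r + 1)\<^sup>2" unfolding mu_c 1 by (simp add: power2_eq_square algebra_simps)
      hence "r\<^sup>2 - 1 \<le> mu" using r by (simp add: power2_eq_square algebra_simps)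
      hence "(r\<^sup>2 - 1) / mu \<le> 1" using mupos by simp
      thus ?thesis using abs_lam[OF mupos] n by simp
    next
      case 2
      have cond: "r + real (Suc n) * (1 - r) = r * (r + real n * (1 - r))"
        using red(2) unfolding 2 pp_one .
      hence "(1 - r) * (real n + 1 - (real n - 1) * r) = 0" by (simp add: algebra_simps)
      hence "real n + 1 - (real n - 1) * r = 0" using r by simp
      hence eqn: "real n * r - r = real n + 1" by (simp add: algebra_simps)
      have mu1: "mu = (r - 1)\<^sup>2" unfolding mu_c 2 by (simp add: power2_eq_square algebra_simps)
      have "r\<^sup>2 - 1 = (r + 1) * (r - 1)" by (simp add: power2_eq_square algebra_simps)
      also have "r + 1 = real n * (r - 1)" using eqn by (simp add: algebra_simps)
      finally have "r\<^sup>2 - 1 = real n * mu" unfolding mu1 by (simp add: power2_eq_square)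
      thus ?thesis using abs_lam[OF mupos] mupos by simp
    next
      case 3
      define t where "t = arccos c"
      have t: "cos t = c" "0 < t" "t < pi" unfolding t_def using 3 arccos_lt_bounded[of c] by auto
      have st: "sin t \<noteq> 0" unfolding t_def using 3 by (intro sin_arccos_nonzero) auto
      have "pp (cos t) r (Suc n) = r * pp (cos t) r n" using red(2) unfolding t(1) .
      hence "(sin (real (Suc n) * t) - r * sin ((real (Suc n) - 1) * t)) / sin t
           = r * ((sin (real n * t) - r * sin ((real n - 1) * t)) / sin t)"
        unfolding pp_trig[OF st] .
      hence "sin (real (Suc n) * t) - r * sin ((real (Suc n) - 1) * t)
           = r * (sin (real n * t) - r * sin ((real n - 1) * t))" using st by (simp add: field_simps)
      hence E: "sin ((real n + 1) * t) - 2 * r * sin (real n * t) + r\<^sup>2 * sin ((real n - 1) * t) = 0"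
        by (simp add: algebra_simps power2_eq_square)
      have "(r\<^sup>2 - 1) / (1 + r\<^sup>2 - 2 * r * cos t) \<le> real n"
        using trig_case[OF r _ t(2) t(3) E] n by simp
      thus ?thesis using abs_lam[OF mupos] unfolding mu_c t(1) by simp
    qed
  qed
  have outr: "\<bar>lam\<bar> > real n" if c1: "\<not> (-1 \<le> c \<and> c \<le> 1)"
  proof -
    consider "c < -1" | "c > 1" using c1 by linarith
    thus ?thesis
    proof cases
      case 1
      then obtain z where z: "z < -1" "2 * c = z + 1 / z" by (rule z_neg)
      have zz: "z \<noteq> 0" "z\<^sup>2 \<noteq> 1" using z rx1[of "-z" "-z"] by (auto simp: power2_eq_square)
      have "z ^ (2 * n) * (z - r)\<^sup>2 = (r * z - 1)\<^sup>2" by (rule pp_z_cond[OF zz z(2) red(2)])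
      moreover have "z ^ (2 * n) * (z - r)\<^sup>2 \<noteq> (r * z - 1)\<^sup>2" using z r n by (intro neg_z_impossible) auto
      ultimately show ?thesis by simp
    next
      case 2
      then obtain z where z: "z > 1" "2 * c = z + 1 / z" by (rule z_big)
      have zz: "z \<noteq> 0" "z\<^sup>2 \<noteq> 1" using z rx1[of z z] by (auto simp: power2_eq_square)
      have Q: "z ^ (2 * n) * (z - r)\<^sup>2 = (r * z - 1)\<^sup>2" by (rule pp_z_cond[OF zz z(2) red(2)])
      have "2 * r * c = r * (2 * c)" by simp
      also have "\<dots> = r * (z + 1 / z)" using z(2) by simp
      finally have mu_z: "mu = 1 + r\<^sup>2 - r * (z + 1 / z)" unfolding mu_c by simp
      consider "z = r" | "z < r" | "z > r" by linarith
      thus ?thesis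
      proof cases
        case 1
        hence "mu = 0" unfolding mu_z using r by (simp add: power2_eq_square field_simps)
        thus ?thesis using mu0 by simp
      next
        case 2
        have a: "z ^ n * (r - z) > 0" using z 2 by simp
        have b: "r * z - 1 > 0" using rx1[of r z] r z by simp
        have zn: "z ^ (2 * n) = z ^ n * z ^ n" by (simp add: mult_2 power_add)
        have "(z ^ n * (r - z))\<^sup>2 = z ^ (2 * n) * (z - r)\<^sup>2"
          unfolding zn by (simp add: power2_eq_square algebra_simps)
        hence "(z ^ n * (r - z))\<^sup>2 = (r * z - 1)\<^sup>2" using Q by simp
        hence eq: "z ^ n * (r - z) = r * z - 1" using sq_eq_pos[OF a b] by simp
        have "(1 - r\<^sup>2) / (1 + r\<^sup>2 - r * (z + 1 / z)) < - real n" by (rule mid_z_case[OF z(1) 2 eq])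
        hence "lam < - real n" unfolding lam_mu mu_z .
        thus ?thesis by simp
      next
        case 3
        have w: "pp c r (Suc j) > 0" for j using pp_pos[OF 3 r z(2)] .
        have "lam > real n" by (rule perron[OF r n w red(3)])
        thus ?thesis by simp
      qed
    qed
  qed
  show ?thesis using rng inr outr by (meson not_less)
qed


lemma small_case:
  fixes v :: "real vec"
  assumes n: "n \<ge> 2" and r: "r > 0" "r < 1"
    and v: "v \<in> carrier_vec n" "v \<noteq> 0\<^sub>v n" "KMS n r *\<^sub>v v = lam \<cdot>\<^sub>v v"
  shows "lam \<in> sigma_range r"
proof -
  have r0: "r > 0" "r \<noteq> 1" using r by auto
  define c where "c = (1 + r\<^sup>2 - (1 - r\<^sup>2) / lam) / (2 * r)"
  have red: "lam \<noteq> 0" "pp c r (Suc n) = r * pp c r n"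
    using reduce[OF n r0 v] unfolding c_def[symmetric] by auto
  have "-1 \<le> c \<and> c \<le> 1"
  proof (rule ccontr)
    assume "\<not> ?thesis"
    then consider "c < -1" | "c > 1" by linarith
    thus False
    proof cases
      case 1
      then obtain z where z: "z < -1" "2 * c = z + 1 / z" by (rule z_neg)
      have zz: "z \<noteq> 0" "z\<^sup>2 \<noteq> 1" using z rx1[of "-z" "-z"] by (auto simp: power2_eq_square)
      have "z ^ (2 * n) * (z - r)\<^sup>2 = (r * z - 1)\<^sup>2" by (rule pp_z_cond[OF zz z(2) red(2)])
      moreover have "z ^ (2 * n) * (z - r)\<^sup>2 \<noteq> (r * z - 1)\<^sup>2" using z r n by (intro neg_z_impossible) auto
      ultimately show False by simp
    next
      case 2
      then obtain z where z: "z > 1" "2 * c = z + 1 / z" by (rule z_big)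
      have zz: "z \<noteq> 0" "z\<^sup>2 \<noteq> 1" using z rx1[of z z] by (auto simp: power2_eq_square)
      have "z ^ (2 * n) * (z - r)\<^sup>2 = (r * z - 1)\<^sup>2" by (rule pp_z_cond[OF zz z(2) red(2)])
      moreover have "z ^ (2 * n) * (z - r)\<^sup>2 \<noteq> (r * z - 1)\<^sup>2" using z r n by (intro small_rho_z_impossible) auto
      ultimately show False by simp
    qed
  qed
  thus ?thesis using range_of_c[OF r0 red(1) c_def] by simp
qed

theorem corollary6p9:
  fixes n :: nat and \<rho> lam :: real
  assumes "n \<ge> 2" and "\<rho> \<ge> 0"
    and "eigenvalue (KMS n \<rho>) lam"
  shows "extraordinary \<rho> lam \<longleftrightarrow> \<bar>lam\<bar> > real n"
proof -
  have dr: "dim_row (KMS n \<rho>) = n" unfolding KMS_def by simp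
  obtain v where v: "v \<in> carrier_vec n" "v \<noteq> 0\<^sub>v n" "KMS n \<rho> *\<^sub>v v = lam \<cdot>\<^sub>v v"
    using assms(3) unfolding eigenvalue_def eigenvector_def dr by blast
  consider "\<rho> = 0 \<or> \<rho> = 1" | "0 < \<rho> \<and> \<rho> < 1" | "\<rho> > 1" using assms(2) by linarith
  thus ?thesis
  proof cases
    case 1
    hence "ordinary \<rho> lam" unfolding ordinary_def by auto
    moreover have "\<bar>lam\<bar> \<le> real n" using 1 by (intro row_bound[OF _ _ v]) auto
    ultimately show ?thesis unfolding extraordinary_def by simp
  next
    case 2
    hence "ordinary \<rho> lam" unfolding ordinary_def using small_case[OF assms(1) _ _ v] by auto
    moreover have "\<bar>lam\<bar> \<le> real n" using 2 by (intro row_bound[OF _ _ v]) auto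
    ultimately show ?thesis unfolding extraordinary_def by simp
  next
    case 3
    hence "extraordinary \<rho> lam \<longleftrightarrow> lam \<notin> sigma_range \<rho>" unfolding extraordinary_def ordinary_def by auto
    thus ?thesis using big_case[OF assms(1) 3 v] by simp
  qed
qed

end
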